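(* Let $d=d(n)$, and let $X=X(n)\in\mathbb{R}^d$ and $Y=Y(n)\in\mathbb{R}^d$ be sequences of random vectors defined on a common probability space. Let $a_n,b_n$ be sequences of real constants and let $F$ be a continuous cdf. Suppose that for every $x\in\mathbb{R}$ with $0<F(x)<1$: (1) ${\sf Pr}(\max_{i\in[d]}Y_i\le a_n+b_nx)\to F(x)$ as $n\to\infty$; and (2) for every fixed $\varepsilon>0$, $\sum_{i=1}^d{\sf Pr}(|X_i-Y_i|>\varepsilon b_n)=o(1)$. Then ${\sf Pr}(\max_{i\in[d]}X_i\le a_n+b_nx)\to F(x)$ for all $x\in\mathbb{R}$. *)

theory Defs
  imports "HOL-Probability.Probability"
begin

definition is_cdf :: "(real \<Rightarrow> real) \<Rightarrow> bool" where
  "is_cdf F \<longleftrightarrow> mono F \<and> (\<forall>x. continuous (at_right x) F)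
     \<and> (F \<longlongrightarrow> 0) at_bot \<and> (F \<longlongrightarrow> 1) at_top"

end

theory Submission
  imports Defs
begin

lemma coll_sets:
  assumes "finite I" "\<And>i. i \<in> I \<Longrightarrow> f i \<in> borel_measurable M"
  shows "{\<omega> \<in> space M. \<forall>i\<in>I. f i \<omega> \<le> (c::real)} \<in> sets M"
proof (rule sets.sets_Collect_finite_All[OF _ assms(1)])
  fix i assume "i \<in> I"
  then have [measurable]: "f i \<in> borel_measurable M" using assms(2) by blast
  show "{x \<in> space M. f i x \<le> c} \<in> sets M" by measurable
qed

lemma diff_sets:
  assumes "f \<in> borel_measurable M" "g \<in> borel_measurable M"
  shows "{\<omega> \<in> space M. \<bar>f \<omega> - g \<omega>\<bar> > (c::real)} \<in> sets M"
  using assms by measurable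

theorem lemma4:
  fixes M :: "'a measure"
    and d :: "nat \<Rightarrow> nat"
    and X Y :: "nat \<Rightarrow> nat \<Rightarrow> 'a \<Rightarrow> real"
    and a b :: "nat \<Rightarrow> real"
    and F :: "real \<Rightarrow> real"
  assumes "prob_space M"
    and X_meas: "\<And>n i. i \<in> {1..d n} \<Longrightarrow> X n i \<in> borel_measurable M"
    and Y_meas: "\<And>n i. i \<in> {1..d n} \<Longrightarrow> Y n i \<in> borel_measurable M"
    and "is_cdf F" and "continuous_on UNIV F"
    and conv_Y: "\<And>x. 0 < F x \<Longrightarrow> F x < 1 \<Longrightarrow>
       (\<lambda>n. measure M {\<omega> \<in> space M. \<forall>i\<in>{1..d n}. Y n i \<omega> \<le> a n + b n * x})
         \<longlonglongrightarrow> F x"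
    and close: "\<And>x \<epsilon>. 0 < F x \<Longrightarrow> F x < 1 \<Longrightarrow> \<epsilon> > 0 \<Longrightarrow>
       (\<lambda>n. \<Sum>i\<in>{1..d n}. measure M {\<omega> \<in> space M. \<bar>X n i \<omega> - Y n i \<omega>\<bar> > \<epsilon> * b n})
         \<longlonglongrightarrow> 0"
  shows "\<forall>x. (\<lambda>n. measure M {\<omega> \<in> space M. \<forall>i\<in>{1..d n}. X n i \<omega> \<le> a n + b n * x})
           \<longlonglongrightarrow> F x"
proof
  fix x
  interpret P: prob_space M by fact
  define PX where "PX n x = measure M {\<omega> \<in> space M. \<forall>i\<in>{1..d n}. X n i \<omega> \<le> a n + b n * x}" for n x
  define PY where "PY n x = measure M {\<omega> \<in> space M. \<forall>i\<in>{1..d n}. Y n i \<omega> \<le> a n + b n * x}" for n x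
  define S where "S n \<epsilon> = (\<Sum>i\<in>{1..d n}. measure M {\<omega> \<in> space M. \<bar>X n i \<omega> - Y n i \<omega>\<bar> > \<epsilon> * b n})" for n \<epsilon>
  define U where "U n \<epsilon> = (\<Union>i\<in>{1..d n}. {\<omega> \<in> space M. \<bar>X n i \<omega> - Y n i \<omega>\<bar> > \<epsilon> * b n})" for n \<epsilon>
  have Usets: "U n \<epsilon> \<in> sets M" for n \<epsilon>
    unfolding U_def using diff_sets[OF X_meas Y_meas] by blast
  have SU: "measure M (U n \<epsilon>) \<le> S n \<epsilon>" for n \<epsilon>
    unfolding U_def S_def
    by (rule measure_UNION_le) (auto intro: diff_sets[OF X_meas Y_meas])
  have XS: "{\<omega> \<in> space M. \<forall>i\<in>{1..d n}. X n i \<omega> \<le> c} \<in> sets M" for n c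
    by (rule coll_sets) (auto intro: X_meas)
  have YS: "{\<omega> \<in> space M. \<forall>i\<in>{1..d n}. Y n i \<omega> \<le> c} \<in> sets M" for n c
    by (rule coll_sets) (auto intro: Y_meas)
  have up: "PX n x \<le> PY n (x + \<epsilon>) + S n \<epsilon>" for n x \<epsilon>
  proof -
    have "{\<omega> \<in> space M. \<forall>i\<in>{1..d n}. X n i \<omega> \<le> a n + b n * x} \<subseteq>
          {\<omega> \<in> space M. \<forall>i\<in>{1..d n}. Y n i \<omega> \<le> a n + b n * (x + \<epsilon>)} \<union> U n \<epsilon>"
    proof (intro subsetI)
      fix \<omega> assume "\<omega> \<in> {\<omega> \<in> space M. \<forall>i\<in>{1..d n}. X n i \<omega> \<le> a n + b n * x}"
      then show "\<omega> \<in> {\<omega> \<in> space M. \<forall>i\<in>{1..d n}. Y n i \<omega> \<le> a n + b n * (x + \<epsilon>)} \<union> U n \<epsilon>"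
        unfolding U_def apply (auto simp: algebra_simps not_less abs_le_iff) by (smt (verit, best) atLeastAtMost_iff One_nat_def)
    qed
    then have "PX n x \<le> measure M ({\<omega> \<in> space M. \<forall>i\<in>{1..d n}. Y n i \<omega> \<le> a n + b n * (x + \<epsilon>)} \<union> U n \<epsilon>)"
      unfolding PX_def by (rule P.finite_measure_mono[OF _ sets.Un[OF YS Usets]])
    also have "\<dots> \<le> PY n (x + \<epsilon>) + measure M (U n \<epsilon>)"
      unfolding PY_def by (rule measure_Un_le[OF YS Usets])
    finally show ?thesis using SU[of n \<epsilon>] by linarith
  qed
  have low: "PY n (x - \<epsilon>) \<le> PX n x + S n \<epsilon>" for n x \<epsilon>
  proof -
    have "{\<omega> \<in> space M. \<forall>i\<in>{1..d n}. Y n i \<omega> \<le> a n + b n * (x - \<epsilon>)} \<subseteq>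
          {\<omega> \<in> space M. \<forall>i\<in>{1..d n}. X n i \<omega> \<le> a n + b n * x} \<union> U n \<epsilon>"
    proof (intro subsetI)
      fix \<omega> assume "\<omega> \<in> {\<omega> \<in> space M. \<forall>i\<in>{1..d n}. Y n i \<omega> \<le> a n + b n * (x - \<epsilon>)}"
      then show "\<omega> \<in> {\<omega> \<in> space M. \<forall>i\<in>{1..d n}. X n i \<omega> \<le> a n + b n * x} \<union> U n \<epsilon>"
        unfolding U_def apply (auto simp: algebra_simps not_less abs_le_iff) by (smt (verit, best) atLeastAtMost_iff One_nat_def)
    qed
    then have "PY n (x - \<epsilon>) \<le> measure M ({\<omega> \<in> space M. \<forall>i\<in>{1..d n}. X n i \<omega> \<le> a n + b n * x} \<union> U n \<epsilon>)"
      unfolding PY_def by (rule P.finite_measure_mono[OF _ sets.Un[OF XS Usets]])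
    also have "\<dots> \<le> PX n x + measure M (U n \<epsilon>)"
      unfolding PX_def by (rule measure_Un_le[OF XS Usets])
    finally show ?thesis using SU[of n \<epsilon>] by linarith
  qed
  have cdf: "mono F" "(F \<longlongrightarrow> 0) at_bot" "(F \<longlongrightarrow> 1) at_top"
    using \<open>is_cdf F\<close> unfolding is_cdf_def by auto
  have contF: "continuous_on A F" for A
    using \<open>continuous_on UNIV F\<close> continuous_on_subset by blast
  show "(\<lambda>n. PX n x) \<longlonglongrightarrow> F x"
  proof (rule order_tendstoI)
    fix c assume c: "c > F x"
    show "\<forall>\<^sub>F n in sequentially. PX n x < c"
    proof (cases "c > 1")
      case True
      then show ?thesis unfolding PX_def using P.prob_le_1 
        by (intro always_eventually allI) (smt (verit))
    next
      case False
      define t where "t = (F x + c) / 2"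
      have t: "F x < t" "t < c" "t < 1" using c False unfolding t_def by auto
      have "F x \<ge> 0"
      proof (rule ccontr)
        assume "\<not> F x \<ge> 0"
        then have "\<forall>\<^sub>F y in at_bot. F x < F y" using order_tendstoD(1)[OF cdf(2)] by simp
        then obtain N where N: "\<And>y. y \<le> N \<Longrightarrow> F x < F y" by (auto simp: eventually_at_bot_linorder)
        have "F (min N x) \<le> F x" using cdf(1) by (simp add: monoD)
        with N[of "min N x"] show False by simp
      qed
      then have t0: "0 < t" using t by linarith
      obtain w where w: "F w > t"
      proof -
        obtain N where "\<And>y. y \<ge> N \<Longrightarrow> t < F y"
          using order_tendstoD(1)[OF cdf(3) t(3)] by (auto simp: eventually_at_top_linorder)
        then show ?thesis using that by blast
      qed
      have "x \<le> w"
      proof (rule ccontr)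
        assume "\<not> x \<le> w"
        then have "F w \<le> F x" using cdf(1) by (simp add: monoD)
        with w t(1) show False by simp
      qed
      then obtain z where z: "x \<le> z" "z \<le> w" "F z = t"
        using IVT'[of F x t w] t(1) w contF by (metis less_imp_le)
      have xz: "x < z" using z t(1) by (metis le_less order_less_irrefl)
      have ev1: "\<forall>\<^sub>F n in sequentially. PY n z < t + (c - t) / 2"
        unfolding PY_def by (rule order_tendstoD(2)[OF conv_Y]) (use z t0 t in auto)
      have ev2: "\<forall>\<^sub>F n in sequentially. S n (z - x) < (c - t) / 2"
        unfolding S_def by (rule order_tendstoD(2)[OF close]) (use z t0 t xz in auto)
      have key: "PX n x < c" if h1: "PY n z < t + (c - t) / 2" and h2: "S n (z - x) < (c - t) / 2" for n
      proof -
        have A: "PX n x \<le> PY n z + S n (z - x)" using up[of n x "z - x"] by simp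
        have B: "PY n z + S n (z - x) < t + (c - t) / 2 + (c - t) / 2" using add_strict_mono[OF h1 h2] .
        have C: "t + (c - t) / 2 + (c - t) / 2 = c" by (simp add: field_simps)
        show ?thesis using A B C by linarith
      qed
      show ?thesis using eventually_conj[OF ev1 ev2] by (rule eventually_mono) (use key in blast)
    qed
  next
    fix c assume c: "c < F x"
    show "\<forall>\<^sub>F n in sequentially. c < PX n x"
    proof (cases "c < 0")
      case True
      then show ?thesis unfolding PX_def 
        by (intro always_eventually allI) (smt (verit) measure_nonneg)
    next
      case False
      define t where "t = (F x + c) / 2"
      have t: "F x > t" "t > c" "t > 0" using c False unfolding t_def by auto
      have "F x \<le> 1"
      proof (rule ccontr)
        assume "\<not> F x \<le> 1"
        then have "\<forall>\<^sub>F y in at_top. F y < F x" using order_tendstoD(2)[OF cdf(3)] by simp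
        then obtain N where N: "\<And>y. y \<ge> N \<Longrightarrow> F y < F x" by (auto simp: eventually_at_top_linorder)
        have "F x \<le> F (max N x)" using cdf(1) by (simp add: monoD)
        with N[of "max N x"] show False by simp
      qed
      then have t1: "t < 1" using t by linarith
      obtain w where w: "F w < t"
      proof -
        obtain N where "\<And>y. y \<le> N \<Longrightarrow> F y < t"
          using order_tendstoD(2)[OF cdf(2) t(3)] by (auto simp: eventually_at_bot_linorder)
        then show ?thesis using that by blast
      qed
      have "w \<le> x"
      proof (rule ccontr)
        assume "\<not> w \<le> x"
        then have "F x \<le> F w" using cdf(1) by (simp add: monoD)
        with w t(1) show False by simp
      qed
      then obtain z where z: "w \<le> z" "z \<le> x" "F z = t"
        using IVT'[of F w t x] t(1) w contF by (metis less_imp_le)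
      have xz: "z < x" using z t(1) by (metis le_less order_less_irrefl)
      have ev1: "\<forall>\<^sub>F n in sequentially. PY n z > t - (t - c) / 2"
        unfolding PY_def by (rule order_tendstoD(1)[OF conv_Y]) (use z t1 t in auto)
      have ev2: "\<forall>\<^sub>F n in sequentially. S n (x - z) < (t - c) / 2"
        unfolding S_def by (rule order_tendstoD(2)[OF close]) (use z t1 t xz in auto)
      have key: "c < PX n x" if h1: "PY n z > t - (t - c) / 2" and h2: "S n (x - z) < (t - c) / 2" for n
      proof -
        have A: "PY n z \<le> PX n x + S n (x - z)" using low[of n x "x - z"] by simp
        have B: "t - (t - c) / 2 + S n (x - z) < PY n z + (t - c) / 2" using add_strict_mono[OF h1 h2] .
        have C: "t - (t - c) / 2 - (t - c) / 2 = c" by (simp add: field_simps)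
        show ?thesis using A B C by linarith
      qed
      show ?thesis using eventually_conj[OF ev1 ev2] by (rule eventually_mono) (use key in blast)
    qed
  qed
qed

end
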